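(* In the setting below, define real numbers $\epsilon_t$ by $\epsilon_t=1$ for $t\le 0$ and, for $t\ge 1$, $$\epsilon_t=\kappa^t+\alpha\mu\sum_{j=0}^{t-1}\kappa^j\sum_{i=1}^{n-1}\epsilon_{t-1-j-i}.$$ Then for all $t\ge 1$, $\mathcal{E}(t)\le\epsilon_t\,\mathcal{E}(0)$.
   Context: Let $\mathcal{A}*\mathcal{X}=\mathcal{B}$ be a consistent tensor system with unique solution $\mathcal{X}^*$, $\mathcal{A}\in\mathbb{R}^{n_1\times n_2\times n}$, $\mathcal{B}\in\mathbb{R}^{n_1\times n_3\times n}$, $\alpha>0$. Frontal slices $A_k=\mathcal{A}(:,:,k)$; $\mathrm{unfold}$ stacks them vertically, $\mathrm{fold}$ is its inverse, $\mathrm{bcirc}(\mathcal{A})$ is the block-circulant matrix with $(p,q)$ block $A_{((p-q)\bmod n)+1}$, and $\mathcal{A}*\mathcal{X}=\mathrm{fold}(\mathrm{bcirc}(\mathcal{A})\mathrm{unfold}(\mathcal{X}))$. $\mathcal{I}$ is the identity tensor (first frontal slice the identity, others zero); $\mathcal{A}^T$ transposes each frontal slice and reverses the order of slices $2,\dots,n$; $\|\cdot\|_F$ is the Frobenius norm and $\|\mathcal{C}\|_{op}=\|\mathrm{bcirc}(\mathcal{C})\|_2$. $\tilde{\mathcal{A}}_k$ has $k$-th frontal slice $A_k$ and zeros elsewhere. $\kappa=\max_i\|\mathcal{I}-\alpha\tilde{\mathcal{A}}_i^T*\tilde{\mathcal{A}}_i\|_{op}$, $\mu=\max_{i\neq j}\|\tilde{\mathcal{A}}_i^T*\tilde{\mathcal{A}}_j\|_{op}$.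 Cyclic frontal slice descent: $\mathcal{X}(t)=0$ for $t\le 0$; $\mathcal{R}(t+1)=\mathcal{B}-\sum_{j=0}^{n-1}\tilde{\mathcal{A}}_{((t-j)\bmod n)+1}*\mathcal{X}(t-j)$, $\mathcal{X}(t+1)=\mathcal{X}(t)+\alpha\tilde{\mathcal{A}}_{(t\bmod n)+1}^T*\mathcal{R}(t+1)$ for $t\ge 0$. $\mathcal{E}(t)=\|\mathcal{X}(t)-\mathcal{X}^*\|_F$, so $\mathcal{E}(t)=\|\mathcal{X}^*\|_F$ for $t\le 0$. *)

theory Defs
  imports Complex_Main
begin

text \<open>Third-order real tensors are represented as functions of three 0-based indices
  (row, column, frontal slice). Only entries in the index ranges given by the explicit
  dimensions are meaningful.\<close>

type_synonym tensor = "nat \<Rightarrow> nat \<Rightarrow> nat \<Rightarrow> real"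

text \<open>t-product A * X with n frontal slices and inner dimension m:
  fold(bcirc(A) unfold(X)); slice k of the result is sum over q of A_((k-q) mod n) X_q.\<close>
definition tprod :: "nat \<Rightarrow> nat \<Rightarrow> tensor \<Rightarrow> tensor \<Rightarrow> tensor" where
  "tprod n m A X = (\<lambda>i j k. \<Sum>q<n. \<Sum>l<m. A i l ((k + n - q) mod n) * X l j q)"

definition ttrans :: "nat \<Rightarrow> tensor \<Rightarrow> tensor" where
  "ttrans n A = (\<lambda>i j k. A j i ((n - k) mod n))"

definition tident :: tensor where
  "tident = (\<lambda>i j k. if k = 0 \<and> i = j then 1 else 0)"

definition tslice :: "tensor \<Rightarrow> nat \<Rightarrow> tensor" where
  "tslice A k = (\<lambda>i j q. if q = k then A i j q else 0)"

definition frob :: "nat \<Rightarrow> nat \<Rightarrow> nat \<Rightarrow> tensor \<Rightarrow> real" where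
  "frob a b n C = sqrt (\<Sum>i<a. \<Sum>j<b. \<Sum>k<n. (C i j k)\<^sup>2)"

text \<open>Block-circulant matrix of an a x b x n tensor, an (a n) x (b n) matrix whose
  (p,q) block is the frontal slice ((p-q) mod n).\<close>
definition bcirc :: "nat \<Rightarrow> nat \<Rightarrow> nat \<Rightarrow> tensor \<Rightarrow> nat \<Rightarrow> nat \<Rightarrow> real" where
  "bcirc a b n C = (\<lambda>r c. C (r mod a) (c mod b) ((r div a + n - c div b) mod n))"

definition mat_norm2 :: "nat \<Rightarrow> nat \<Rightarrow> (nat \<Rightarrow> nat \<Rightarrow> real) \<Rightarrow> real" where
  "mat_norm2 m k M = Sup {sqrt (\<Sum>r<m. (\<Sum>c<k. M r c * x c)\<^sup>2) | x.
        (\<Sum>c<k. (x c)\<^sup>2) \<le> 1}"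

definition top_norm :: "nat \<Rightarrow> nat \<Rightarrow> nat \<Rightarrow> tensor \<Rightarrow> real" where
  "top_norm a b n C = mat_norm2 (a * n) (b * n) (bcirc a b n C)"

end

theory Submission
  imports Defs "HOL-Analysis.L2_Norm"
begin

lemma sum_group_nat:
  fixes f :: "nat \<Rightarrow> real"
  shows "(\<Sum>c<k*n. f c) = (\<Sum>q<n. \<Sum>l<k. f (q*k + l))"
proof -
  have "(\<Sum>c<k*n. f c) = (\<Sum>c<n*k. f c)" by (simp add: mult.commute)
  also have "\<dots> = (\<Sum>q<n. sum f {q*k..<q*k+k})" by (rule sum.nat_group[symmetric])
  also have "\<dots> = (\<Sum>q<n. \<Sum>l<k. f (q*k + l))"
  proof (rule sum.cong[OF refl])
    fix q
    show "sum f {q*k..<q*k+k} = (\<Sum>l<k. f (q*k + l))"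
    proof -
      have "{q*k..<q*k+k} = (\<lambda>l. q*k+l) ` {..<k}"
        by (simp add: lessThan_atLeast0 image_add_atLeastLessThan add.commute)
      then show ?thesis by (simp add: sum.reindex)
    qed
  qed
  finally show ?thesis .
qed

lemma frob_L2: "frob a b n C = L2_set (\<lambda>(i,j,k). C i j k) ({..<a} \<times> {..<b} \<times> {..<n})"
  unfolding frob_def L2_set_def
  by (simp add: sum.cartesian_product case_prod_beta)

lemma frob_nonneg: "frob a b n C \<ge> 0"
  by (simp add: frob_def sum_nonneg)

lemma frob_cong:
  assumes "\<And>i j k. i < a \<Longrightarrow> j < b \<Longrightarrow> k < n \<Longrightarrow> C i j k = D i j k"
  shows "frob a b n C = frob a b n D"
  unfolding frob_def using assms by (intro arg_cong[where f=sqrt] sum.cong refl) auto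

lemma frob_add: "frob a b n (\<lambda>i j k. C i j k + D i j k) \<le> frob a b n C + frob a b n D"
proof -
  have e: "(\<lambda>(i,j,k). C i j k + D i j k) = (\<lambda>x. (\<lambda>(i,j,k). C i j k) x + (\<lambda>(i,j,k). D i j k) x)"
    by auto
  show ?thesis unfolding frob_L2 e by (rule L2_set_triangle_ineq)
qed

lemma frob_scale: "frob a b n (\<lambda>i j k. c * C i j k) = \<bar>c\<bar> * frob a b n C"
  unfolding frob_def
  by (simp add: power_mult_distrib real_sqrt_mult sum_distrib_left[symmetric])

lemma frob_sub: "frob a b n (\<lambda>i j k. C i j k - D i j k) \<le> frob a b n C + frob a b n D"
proof -
  have "frob a b n (\<lambda>i j k. C i j k - D i j k) = frob a b n (\<lambda>i j k. C i j k + (-1) * D i j k)"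
    by simp
  also have "\<dots> \<le> frob a b n C + frob a b n (\<lambda>i j k. (-1) * D i j k)" by (rule frob_add)
  also have "\<dots> = frob a b n C + frob a b n D" using frob_scale[of a b n "-1" D] by simp
  finally show ?thesis .
qed

lemma frob_sum:
  assumes "finite S"
  shows "frob a b n (\<lambda>i j k. \<Sum>s\<in>S. F s i j k) \<le> (\<Sum>s\<in>S. frob a b n (F s))"
  using assms
proof (induction S rule: finite_induct)
  case empty
  then show ?case by (simp add: frob_def)
next
  case (insert x S)
  have "frob a b n (\<lambda>i j k. \<Sum>s\<in>insert x S. F s i j k)
      = frob a b n (\<lambda>i j k. F x i j k + (\<Sum>s\<in>S. F s i j k))"
    using insert by simp
  also have "\<dots> \<le> frob a b n (F x) + frob a b n (\<lambda>i j k. \<Sum>s\<in>S. F s i j k)"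
    by (rule frob_add)
  also have "\<dots> \<le> frob a b n (F x) + (\<Sum>s\<in>S. frob a b n (F s))" using insert by simp
  finally show ?case using insert by simp
qed

lemma row_bound:
  fixes M x :: "nat \<Rightarrow> real"
  assumes "(\<Sum>c<k. (x c)\<^sup>2) \<le> 1"
  shows "(\<Sum>c<k. M c * x c)\<^sup>2 \<le> (\<Sum>c<k. (M c)\<^sup>2)"
proof -
  have "\<bar>\<Sum>c<k. M c * x c\<bar> \<le> (\<Sum>c<k. \<bar>M c\<bar> * \<bar>x c\<bar>)"
    by (metis (no_types, lifting) abs_mult sum.cong sum_abs)
  also have "\<dots> \<le> L2_set M {..<k} * L2_set x {..<k}" by (rule L2_set_mult_ineq)
  also have "\<dots> \<le> L2_set M {..<k} * 1"
    using assms by (intro mult_left_mono L2_set_nonneg) (simp add: L2_set_def)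
  finally have h: "\<bar>\<Sum>c<k. M c * x c\<bar> \<le> L2_set M {..<k}" by simp
  have "(\<Sum>c<k. M c * x c)\<^sup>2 = \<bar>\<Sum>c<k. M c * x c\<bar>\<^sup>2" by simp
  also have "\<dots> \<le> (L2_set M {..<k})\<^sup>2" using h by (intro power_mono) auto
  also have "\<dots> = (\<Sum>c<k. (M c)\<^sup>2)" by (simp add: L2_set_def sum_nonneg)
  finally show ?thesis .
qed

lemma mat_norm2_props:
  fixes M :: "nat \<Rightarrow> nat \<Rightarrow> real" and m k :: nat
  defines "S \<equiv> {sqrt (\<Sum>r<m. (\<Sum>c<k. M r c * x c)\<^sup>2) | x. (\<Sum>c<k. (x c)\<^sup>2) \<le> 1}"
  shows "bdd_above S" and "S \<noteq> {}" and "mat_norm2 m k M = Sup S"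
proof -
  show "mat_norm2 m k M = Sup S" unfolding S_def mat_norm2_def ..
  have "sqrt (\<Sum>r<m. (\<Sum>c<k. M r c * (\<lambda>_. 0) c)\<^sup>2) \<in> S" unfolding S_def
    by (rule CollectI, rule exI[of _ "\<lambda>_. 0"]) simp
  then show "S \<noteq> {}" by blast
  show "bdd_above S" unfolding bdd_above_def
  proof (intro exI ballI)
    fix y assume "y \<in> S"
    then obtain x where y: "y = sqrt (\<Sum>r<m. (\<Sum>c<k. M r c * x c)\<^sup>2)" and x: "(\<Sum>c<k. (x c)\<^sup>2) \<le> 1"
      unfolding S_def by blast
    show "y \<le> sqrt (\<Sum>r<m. \<Sum>c<k. (M r c)\<^sup>2)"
      unfolding y by (intro real_sqrt_le_mono sum_mono row_bound x)
  qed
qed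

lemma mat_norm2_nonneg: "mat_norm2 m k M \<ge> 0"
proof -
  note p = mat_norm2_props[where M=M and m=m and k=k]
  have "sqrt (\<Sum>r<m. (\<Sum>c<k. M r c * (\<lambda>_. 0) c)\<^sup>2) \<le> mat_norm2 m k M"
    unfolding p(3) by (rule cSup_upper[OF _ p(1)], rule CollectI, rule exI[of _ "\<lambda>_. 0"]) simp
  then show ?thesis by simp
qed

lemma mat_norm2_bound:
  "(\<Sum>r<m. (\<Sum>c<k. M r c * x c)\<^sup>2) \<le> (mat_norm2 m k M)\<^sup>2 * (\<Sum>c<k. (x c)\<^sup>2)"
proof (cases "(\<Sum>c<k. (x c)\<^sup>2) = 0")
  case True
  then have "\<forall>c<k. x c = 0" by (simp add: sum_nonneg_eq_0_iff)
  then show ?thesis by (simp add: True)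
next
  case False
  define s where "s = (\<Sum>c<k. (x c)\<^sup>2)"
  have s0: "s > 0" using False sum_nonneg[of "{..<k}" "\<lambda>c. (x c)\<^sup>2"] unfolding s_def by auto
  define y where "y c = x c / sqrt s" for c
  have ys: "(\<Sum>c<k. (y c)\<^sup>2) = 1"
    using s0 by (simp add: y_def power_divide sum_divide_distrib[symmetric] s_def[symmetric])
  note p = mat_norm2_props[where M=M and m=m and k=k]
  have le: "sqrt (\<Sum>r<m. (\<Sum>c<k. M r c * y c)\<^sup>2) \<le> mat_norm2 m k M"
    unfolding p(3) by (rule cSup_upper[OF _ p(1)]) (use ys in force)
  have eq: "(\<Sum>r<m. (\<Sum>c<k. M r c * y c)\<^sup>2) = (\<Sum>r<m. (\<Sum>c<k. M r c * x c)\<^sup>2) / s"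
    using s0 by (simp add: y_def sum_divide_distrib[symmetric] power_divide times_divide_eq_right)
  have "(\<Sum>r<m. (\<Sum>c<k. M r c * x c)\<^sup>2) / s \<le> (mat_norm2 m k M)\<^sup>2"
    using sqrt_le_D[OF le] eq by simp
  then show ?thesis using s0 by (simp add: s_def[symmetric] pos_divide_le_eq)
qed

lemma frob_sq: "(frob a b n C)\<^sup>2 = (\<Sum>i<a. \<Sum>j<b. \<Sum>k<n. (C i j k)\<^sup>2)"
  unfolding frob_def by (simp add: sum_nonneg)

lemma tprod_row:
  assumes "r < a * n"
  shows "(\<Sum>c<b*n. bcirc a b n C r c * Y (c mod b) j (c div b)) = tprod n b C Y (r mod a) j (r div a)"
proof -
  have "(\<Sum>c<b*n. bcirc a b n C r c * Y (c mod b) j (c div b))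
      = (\<Sum>q<n. \<Sum>l<b. bcirc a b n C r (q*b+l) * Y ((q*b+l) mod b) j ((q*b+l) div b))"
    by (rule sum_group_nat)
  also have "\<dots> = (\<Sum>q<n. \<Sum>l<b. C (r mod a) l ((r div a + n - q) mod n) * Y l j q)"
    by (intro sum.cong refl) (simp add: bcirc_def)
  also have "\<dots> = tprod n b C Y (r mod a) j (r div a)"
    by (simp add: tprod_def)
  finally show ?thesis .
qed

lemma tprod_bound:
  "frob a b3 n (tprod n b C Y) \<le> top_norm a b n C * frob b b3 n Y"
proof -
  define M where "M = bcirc a b n C"
  define L where "L = top_norm a b n C"
  have L: "L = mat_norm2 (a*n) (b*n) M" unfolding L_def M_def top_norm_def ..
  have L0: "L \<ge> 0" unfolding L by (rule mat_norm2_nonneg)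
  have "(frob a b3 n (tprod n b C Y))\<^sup>2 = (\<Sum>j<b3. \<Sum>k<n. \<Sum>i<a. (tprod n b C Y i j k)\<^sup>2)"
    unfolding frob_sq by (subst sum.swap) (simp add: sum.swap[of _ "{..<n}"])
  also have "\<dots> = (\<Sum>j<b3. \<Sum>r<a*n. (tprod n b C Y (r mod a) j (r div a))\<^sup>2)"
  proof (rule sum.cong[OF refl])
    fix j
    have "(\<Sum>r<a*n. (tprod n b C Y (r mod a) j (r div a))\<^sup>2)
        = (\<Sum>q<n. \<Sum>l<a. (tprod n b C Y ((q*a+l) mod a) j ((q*a+l) div a))\<^sup>2)"
      by (rule sum_group_nat)
    also have "\<dots> = (\<Sum>k<n. \<Sum>i<a. (tprod n b C Y i j k)\<^sup>2)"
      by (intro sum.cong refl) simp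
    finally show "(\<Sum>k<n. \<Sum>i<a. (tprod n b C Y i j k)\<^sup>2) = (\<Sum>r<a*n. (tprod n b C Y (r mod a) j (r div a))\<^sup>2)" by simp
  qed
  also have "\<dots> = (\<Sum>j<b3. \<Sum>r<a*n. (\<Sum>c<b*n. M r c * Y (c mod b) j (c div b))\<^sup>2)"
    by (intro sum.cong refl) (simp add: tprod_row M_def)
  also have "\<dots> \<le> (\<Sum>j<b3. L\<^sup>2 * (\<Sum>c<b*n. (Y (c mod b) j (c div b))\<^sup>2))"
    unfolding L by (intro sum_mono mat_norm2_bound)
  also have "\<dots> = L\<^sup>2 * (\<Sum>j<b3. \<Sum>q<n. \<Sum>l<b. (Y l j q)\<^sup>2)"
  proof -
    have "\<And>j. (\<Sum>c<b*n. (Y (c mod b) j (c div b))\<^sup>2) = (\<Sum>q<n. \<Sum>l<b. (Y l j q)\<^sup>2)"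
    proof -
      fix j
      have "(\<Sum>c<b*n. (Y (c mod b) j (c div b))\<^sup>2) = (\<Sum>q<n. \<Sum>l<b. (Y ((q*b+l) mod b) j ((q*b+l) div b))\<^sup>2)"
        by (rule sum_group_nat)
      also have "\<dots> = (\<Sum>q<n. \<Sum>l<b. (Y l j q)\<^sup>2)" by (intro sum.cong refl) simp
      finally show "(\<Sum>c<b*n. (Y (c mod b) j (c div b))\<^sup>2) = (\<Sum>q<n. \<Sum>l<b. (Y l j q)\<^sup>2)" .
    qed
    then show ?thesis by (simp add: sum_distrib_left)
  qed
  also have "\<dots> = L\<^sup>2 * (frob b b3 n Y)\<^sup>2"
    unfolding frob_sq by (subst sum.swap) (simp add: sum.swap[of _ "{..<n}"])
  also have "\<dots> = (L * frob b b3 n Y)\<^sup>2" by (simp add: power_mult_distrib)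
  finally have "(frob a b3 n (tprod n b C Y))\<^sup>2 \<le> (L * frob b b3 n Y)\<^sup>2" .
  then show ?thesis unfolding L_def[symmetric]
    by (rule power2_le_imp_le) (simp add: L0 frob_nonneg)
qed

lemma sum_perm:
  fixes h :: "'a \<Rightarrow> real"
  assumes "finite A" "\<And>x. x \<in> A \<Longrightarrow> f x \<in> A" "\<And>x. x \<in> A \<Longrightarrow> g (f x) = x"
  shows "(\<Sum>x\<in>A. h (f x)) = (\<Sum>x\<in>A. h x)"
proof -
  have inj: "inj_on f A" by (rule inj_on_inverseI[where g=g]) (use assms in auto)
  have "f ` A = A" by (rule endo_inj_surj) (use assms inj in auto)
  then have "(\<Sum>x\<in>A. h x) = (\<Sum>x\<in>f ` A. h x)" by simp
  also have "\<dots> = (\<Sum>x\<in>A. h (f x))" by (simp add: sum.reindex[OF inj])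
  finally show ?thesis by simp
qed

lemma int_submod: "x \<le> n \<Longrightarrow> int ((a + n - x) mod n) = (int a - int x) mod int n"
proof -
  assume "x \<le> n"
  then have "int (a + n - x) = (int a - int x) + int n" by simp
  then show ?thesis by (simp add: of_nat_mod)
qed

lemma modid_a:
  assumes "p < n" "q < (n::nat)"
  shows "((p+q) mod n + n - q) mod n = p"
proof -
  have "int (((p+q) mod n + n - q) mod n) = (int ((p+q) mod n) - int q) mod int n"
    using assms by (intro int_submod) simp
  also have "\<dots> = (int (p+q) mod int n - int q) mod int n" by (simp add: of_nat_mod)
  also have "\<dots> = (int p) mod int n" by (simp add: mod_diff_left_eq)
  also have "\<dots> = int p" using assms by simp
  finally show ?thesis by linarith
qed

lemma modid_b:
  assumes "p < n" "q < (n::nat)"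
  shows "(k + n - (p+q) mod n) mod n = ((k + n - q) mod n + n - p) mod n"
proof -
  have n0: "n > 0" using assms by simp
  have "int ((k + n - (p+q) mod n) mod n) = (int k - int ((p+q) mod n)) mod int n"
    using n0 by (intro int_submod) simp
  also have "\<dots> = (int k - int (p+q) mod int n) mod int n" by (simp add: of_nat_mod)
  also have "\<dots> = (int k - int q - int p) mod int n" by (simp add: mod_diff_right_eq algebra_simps)
  also have "\<dots> = ((int k - int q) mod int n - int p) mod int n" by (simp add: mod_diff_left_eq)
  also have "\<dots> = (int ((k + n - q) mod n) - int p) mod int n"
    using assms by (simp add: int_submod)
  also have "\<dots> = int (((k + n - q) mod n + n - p) mod n)"
    using assms by (simp add: int_submod)
  finally show ?thesis by linarith
qed

lemma sum_rot:
  fixes F :: "nat \<Rightarrow> real"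
  assumes "q < n"
  shows "(\<Sum>p<n. F ((p+q) mod n)) = (\<Sum>p<n. F p)"
  by (rule sum_perm[where g="\<lambda>x. (x + n - q) mod n"]) (use assms modid_a in auto)

lemma tprod_assoc:
  assumes "k < n"
  shows "tprod n b (tprod n m T S) Y i j k = tprod n m T (tprod n b S Y) i j k"
proof -
  have "tprod n m T (tprod n b S Y) i j k
     = (\<Sum>p<n. \<Sum>u<m. \<Sum>q<n. \<Sum>l<b. T i u ((k + n - p) mod n) * S u l ((p + n - q) mod n) * Y l j q)"
    by (simp add: tprod_def sum_distrib_left mult.assoc)
  also have "\<dots> = (\<Sum>q<n. \<Sum>l<b. \<Sum>u<m. \<Sum>p<n. T i u ((k + n - p) mod n) * S u l ((p + n - q) mod n) * Y l j q)"
    (is "?A = _")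
  proof -
    have "?A = (\<Sum>p<n. \<Sum>q<n. \<Sum>u<m. \<Sum>l<b. T i u ((k + n - p) mod n) * S u l ((p + n - q) mod n) * Y l j q)"
      by (rule sum.cong[OF refl], rule sum.swap)
    also have "\<dots> = (\<Sum>p<n. \<Sum>q<n. \<Sum>l<b. \<Sum>u<m. T i u ((k + n - p) mod n) * S u l ((p + n - q) mod n) * Y l j q)"
      by (rule sum.cong[OF refl], rule sum.cong[OF refl], rule sum.swap)
    also have "\<dots> = (\<Sum>q<n. \<Sum>p<n. \<Sum>l<b. \<Sum>u<m. T i u ((k + n - p) mod n) * S u l ((p + n - q) mod n) * Y l j q)"
      by (rule sum.swap)
    also have "\<dots> = (\<Sum>q<n. \<Sum>l<b. \<Sum>p<n. \<Sum>u<m. T i u ((k + n - p) mod n) * S u l ((p + n - q) mod n) * Y l j q)"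
      by (rule sum.cong[OF refl], rule sum.swap)
    also have "\<dots> = (\<Sum>q<n. \<Sum>l<b. \<Sum>u<m. \<Sum>p<n. T i u ((k + n - p) mod n) * S u l ((p + n - q) mod n) * Y l j q)"
      by (rule sum.cong[OF refl], rule sum.cong[OF refl], rule sum.swap)
    finally show ?thesis .
  qed
  also have "\<dots> = (\<Sum>q<n. \<Sum>l<b. \<Sum>u<m. \<Sum>p<n. T i u (((k + n - q) mod n + n - p) mod n) * S u l p * Y l j q)"
  proof (rule sum.cong[OF refl], rule sum.cong[OF refl], rule sum.cong[OF refl])
    fix q l u assume q: "q \<in> {..<n}"
    show "(\<Sum>p<n. T i u ((k + n - p) mod n) * S u l ((p + n - q) mod n) * Y l j q)
        = (\<Sum>p<n. T i u (((k + n - q) mod n + n - p) mod n) * S u l p * Y l j q)"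
    proof -
      have qn: "q < n" using q by simp
      have "(\<Sum>p<n. T i u ((k + n - (p+q) mod n) mod n) * S u l (((p+q) mod n + n - q) mod n) * Y l j q)
          = (\<Sum>p<n. T i u (((k + n - q) mod n + n - p) mod n) * S u l p * Y l j q)"
      proof (rule sum.cong[OF refl])
        fix p assume "p \<in> {..<n}"
        then have pn: "p < n" by simp
        show "T i u ((k + n - (p+q) mod n) mod n) * S u l (((p+q) mod n + n - q) mod n) * Y l j q
          = T i u (((k + n - q) mod n + n - p) mod n) * S u l p * Y l j q"
          using modid_a[OF pn qn] modid_b[OF pn qn, of k] by simp
      qed
      then show ?thesis
        using sum_rot[OF qn, of "\<lambda>p. T i u ((k + n - p) mod n) * S u l ((p + n - q) mod n) * Y l j q"]
        by simp
    qed
  qed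
  also have "\<dots> = (\<Sum>q<n. \<Sum>l<b. \<Sum>p<n. \<Sum>u<m. T i u (((k + n - q) mod n + n - p) mod n) * S u l p * Y l j q)"
    by (rule sum.cong[OF refl], rule sum.cong[OF refl], rule sum.swap)
  also have "\<dots> = tprod n b (tprod n m T S) Y i j k"
    by (simp add: tprod_def sum_distrib_right)
  finally show ?thesis by simp
qed

lemma mod_zero_iff_eq:
  assumes "q < n" "k < (n::nat)"
  shows "((k + n - q) mod n = 0) = (q = k)"
proof (cases "q \<le> k")
  case True
  then have e: "k + n - q = (k - q) + n" by simp
  have "(k - q + n) mod n = k - q" using assms by simp
  then have "(k + n - q) mod n = k - q" by (subst e)
  then show ?thesis using assms True by auto
next
  case False
  then have "k + n - q < n" "k + n - q > 0" using assms by auto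
  then show ?thesis using False by auto
qed

lemma tprod_ident:
  assumes "i < b" "k < n"
  shows "tprod n b tident Y i j k = Y i j k"
proof -
  have "tprod n b tident Y i j k = (\<Sum>q<n. if (k + n - q) mod n = 0 then Y i j q else 0)"
    unfolding tprod_def tident_def
  proof (rule sum.cong[OF refl])
    fix q
    show "(\<Sum>l<b. (if (k + n - q) mod n = 0 \<and> i = l then 1 else 0) * Y l j q) =
        (if (k + n - q) mod n = 0 then Y i j q else 0)"
      using assms(1) by (simp add: if_distrib[of "\<lambda>x. x * _"] sum.delta cong: if_cong)
  qed
  also have "\<dots> = (\<Sum>q<n. if q = k then Y i j q else 0)"
    by (rule sum.cong[OF refl]) (use mod_zero_iff_eq assms(2) in auto)
  also have "\<dots> = Y i j k" using assms(2) by (simp add: sum.delta)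
  finally show ?thesis .
qed

lemma tprod_diff2: "tprod n m C (\<lambda>a b c. Y1 a b c - Y2 a b c) i j k = tprod n m C Y1 i j k - tprod n m C Y2 i j k"
  by (simp add: tprod_def sum_subtractf right_diff_distrib)

lemma tprod_neg2: "tprod n m C (\<lambda>a b c. - Y a b c) i j k = - tprod n m C Y i j k"
  by (simp add: tprod_def sum_negf)

lemma tprod_diff1: "tprod n m (\<lambda>a b c. C1 a b c - \<alpha> * C2 a b c) Y i j k = tprod n m C1 Y i j k - \<alpha> * tprod n m C2 Y i j k"
  by (simp add: tprod_def sum_subtractf left_diff_distrib sum_distrib_left mult.assoc)

lemma tprod_sum2:
  "tprod n m C (\<lambda>a b c. \<Sum>s\<in>S. F s a b c) i j k = (\<Sum>s\<in>S. tprod n m C (F s) i j k)"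
proof -
  have "tprod n m C (\<lambda>a b c. \<Sum>s\<in>S. F s a b c) i j k = (\<Sum>q<n. \<Sum>l<m. \<Sum>s\<in>S. C i l ((k + n - q) mod n) * F s l j q)"
    by (simp add: tprod_def sum_distrib_left)
  also have "\<dots> = (\<Sum>q<n. \<Sum>s\<in>S. \<Sum>l<m. C i l ((k + n - q) mod n) * F s l j q)"
    by (rule sum.cong[OF refl], rule sum.swap)
  also have "\<dots> = (\<Sum>s\<in>S. \<Sum>q<n. \<Sum>l<m. C i l ((k + n - q) mod n) * F s l j q)"
    by (rule sum.swap)
  finally show ?thesis by (simp add: tprod_def)
qed

lemma tprod_cong2:
  assumes "\<And>l q. l < m \<Longrightarrow> q < n \<Longrightarrow> Y l j q = Y' l j q"
  shows "tprod n m C Y i j k = tprod n m C Y' i j k"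
  unfolding tprod_def using assms by (intro sum.cong refl) auto

lemma tslice_sum:
  assumes "n > 0"
  shows "(\<Sum>p<n. tprod n m (tslice A p) Y i j k) = tprod n m A Y i j k"
proof -
  have "(\<Sum>p<n. tprod n m (tslice A p) Y i j k)
     = (\<Sum>p<n. \<Sum>q<n. \<Sum>l<m. (if (k + n - q) mod n = p then A i l ((k + n - q) mod n) else 0) * Y l j q)"
    by (simp add: tprod_def tslice_def)
  also have "\<dots> = (\<Sum>q<n. \<Sum>p<n. \<Sum>l<m. (if (k + n - q) mod n = p then A i l ((k + n - q) mod n) else 0) * Y l j q)"
    by (rule sum.swap)
  also have "\<dots> = (\<Sum>q<n. \<Sum>l<m. \<Sum>p<n. (if (k + n - q) mod n = p then A i l ((k + n - q) mod n) else 0) * Y l j q)"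
    by (rule sum.cong[OF refl], rule sum.swap)
  also have "\<dots> = (\<Sum>q<n. \<Sum>l<m. A i l ((k + n - q) mod n) * Y l j q)"
    using assms by (intro sum.cong refl) (simp add: if_distrib[of "\<lambda>x. x * _"] sum.delta cong: if_cong)
  finally show ?thesis by (simp add: tprod_def)
qed

lemma sigma_perm:
  fixes t :: int and F :: "nat \<Rightarrow> real"
  assumes "n > 0"
  shows "(\<Sum>s<n. F (nat ((t - int s) mod int n))) = (\<Sum>p<n. F p)"
proof (rule sum_perm[where g="\<lambda>p. nat ((t - int p) mod int n)"])
  fix s assume "s \<in> {..<n}"
  then have s: "s < n" by simp
  show "nat ((t - int s) mod int n) \<in> {..<n}" using assms by (simp add: nat_less_iff)
  have "int (nat ((t - int s) mod int n)) = (t - int s) mod int n" using assms by simp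
  then have "(t - int (nat ((t - int s) mod int n))) mod int n = (t - (t - int s)) mod int n"
    by (simp add: mod_diff_right_eq)
  also have "\<dots> = int s" using s by simp
  finally show "nat ((t - int (nat ((t - int s) mod int n))) mod int n) = s" by simp
qed simp

lemma sigma_ne:
  fixes t :: int
  assumes "n > 0" "s \<in> {1..n-1}"
  shows "nat ((t - int s) mod int n) \<noteq> nat (t mod int n)"
proof
  assume "nat ((t - int s) mod int n) = nat (t mod int n)"
  moreover have "(t - int s) mod int n \<ge> 0" "t mod int n \<ge> 0" using assms(1) by simp_all
  ultimately have "(t - int s) mod int n = t mod int n" by (simp add: eq_nat_nat_iff)
  then have "int n dvd (t - int s) - t" by (simp add: mod_eq_dvd_iff)
  then have "int n dvd int s" by (metis add_diff_cancel_left' diff_add_cancel dvd_minus_iff minus_diff_eq)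
  then have "n dvd s" by simp
  moreover have "0 < s" "s < n" using assms by auto
  ultimately show False using nat_dvd_not_less by blast
qed

lemma recursion:
  fixes n1 n2 n3 n :: nat and A B Xstar :: tensor and \<alpha> \<kappa> \<mu> :: real
    and X :: "int \<Rightarrow> tensor" and t :: int
  assumes n_pos: "n > 0" and alpha_pos: "\<alpha> > 0" and t0: "t \<ge> 0"
    and sol: "\<forall>i<n1. \<forall>j<n3. \<forall>k<n. tprod n n2 A Xstar i j k = B i j k"
    and kap: "\<And>i. i < n \<Longrightarrow> top_norm n2 n2 n
              (\<lambda>a b c. tident a b c - \<alpha> * tprod n n1 (ttrans n (tslice A i)) (tslice A i) a b c) \<le> \<kappa>"
    and mu: "\<And>i j. i < n \<Longrightarrow> j < n \<Longrightarrow> i \<noteq> j \<Longrightarrow>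
          top_norm n2 n2 n (tprod n n1 (ttrans n (tslice A i)) (tslice A j)) \<le> \<mu>"
    and X_step: "X (t + 1) = (\<lambda>i j k. X t i j k + \<alpha> * tprod n n1 (ttrans n (tslice A (nat (t mod int n))))
            (\<lambda>a b c. B a b c - (\<Sum>s<n. tprod n n2 (tslice A (nat ((t - int s) mod int n)))
                                          (X (t - int s)) a b c)) i j k)"
  shows "frob n2 n3 n (\<lambda>i j k. X (t+1) i j k - Xstar i j k)
     \<le> \<kappa> * frob n2 n3 n (\<lambda>i j k. X t i j k - Xstar i j k)
        + \<alpha> * \<mu> * (\<Sum>s\<in>{1..n-1}. frob n2 n3 n (\<lambda>i j k. X (t - int s) i j k - Xstar i j k))"
proof -
  define e where "e u = (\<lambda>i j k. X u i j k - Xstar i j k)" for u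
  define \<sigma> where "\<sigma> s = nat ((t - int s) mod int n)" for s
  define i0 where "i0 = nat (t mod int n)"
  define T where "T = ttrans n (tslice A i0)"
  define U where "U = (\<lambda>a b c. tident a b c - \<alpha> * tprod n n1 T (tslice A i0) a b c)"
  define V where "V s = tprod n n1 T (tslice A (\<sigma> s))" for s
  have i0n: "i0 < n" unfolding i0_def using n_pos by (simp add: nat_less_iff)
  have s0: "\<sigma> 0 = i0" unfolding \<sigma>_def i0_def by simp
  have claim1: "B a b c - (\<Sum>s<n. tprod n n2 (tslice A (\<sigma> s)) (X (t - int s)) a b c)
      = - (\<Sum>s<n. tprod n n2 (tslice A (\<sigma> s)) (e (t - int s)) a b c)"
    if "a < n1" "b < n3" "c < n" for a b c
  proof -
    have "B a b c = tprod n n2 A Xstar a b c" using sol that by simp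
    also have "\<dots> = (\<Sum>p<n. tprod n n2 (tslice A p) Xstar a b c)" using tslice_sum[OF n_pos] by simp
    also have "\<dots> = (\<Sum>s<n. tprod n n2 (tslice A (\<sigma> s)) Xstar a b c)"
      unfolding \<sigma>_def by (rule sigma_perm[OF n_pos, symmetric])
    finally have "B a b c = (\<Sum>s<n. tprod n n2 (tslice A (\<sigma> s)) Xstar a b c)" .
    then show ?thesis
      by (simp add: e_def tprod_diff2 sum_subtractf)
  qed
  have split: "(\<Sum>s<n. f s) = f 0 + (\<Sum>s\<in>{1..n-1}. f s)" for f :: "nat \<Rightarrow> real"
  proof -
    have "{..<n} = insert 0 {1..n-1}" using n_pos by auto
    then show ?thesis by simp
  qed
  have claim2: "e (t+1) i j k = tprod n n2 U (e t) i j k - \<alpha> * (\<Sum>s\<in>{1..n-1}. tprod n n2 (V s) (e (t - int s)) i j k)"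
    if ij: "i < n2" "j < n3" "k < n" for i j k
  proof -
    have "tprod n n1 T (\<lambda>a b c. B a b c - (\<Sum>s<n. tprod n n2 (tslice A (\<sigma> s)) (X (t - int s)) a b c)) i j k
        = tprod n n1 T (\<lambda>a b c. - (\<Sum>s<n. tprod n n2 (tslice A (\<sigma> s)) (e (t - int s)) a b c)) i j k"
      by (rule tprod_cong2) (use claim1 ij in auto)
    also have "\<dots> = - (\<Sum>s<n. tprod n n1 T (tprod n n2 (tslice A (\<sigma> s)) (e (t - int s))) i j k)"
      by (simp add: tprod_neg2 tprod_sum2)
    also have "\<dots> = - (\<Sum>s<n. tprod n n2 (V s) (e (t - int s)) i j k)"
      unfolding V_def using ij by (simp add: tprod_assoc)
    finally have h: "tprod n n1 T (\<lambda>a b c. B a b c - (\<Sum>s<n. tprod n n2 (tslice A (\<sigma> s)) (X (t - int s)) a b c)) i j k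
        = - (\<Sum>s<n. tprod n n2 (V s) (e (t - int s)) i j k)" .
    have hU: "tprod n n2 U (e t) i j k = e t i j k - \<alpha> * tprod n n2 (V 0) (e t) i j k"
      unfolding U_def V_def s0 using ij by (simp add: tprod_diff1 tprod_ident)
    have xs: "X (t+1) i j k = X t i j k + \<alpha> * tprod n n1 T (\<lambda>a b c. B a b c - (\<Sum>s<n. tprod n n2 (tslice A (\<sigma> s)) (X (t - int s)) a b c)) i j k"
      unfolding T_def i0_def \<sigma>_def by (subst X_step) (rule refl)
    have sp: "(\<Sum>s<n. tprod n n2 (V s) (e (t - int s)) i j k) = tprod n n2 (V 0) (e t) i j k + (\<Sum>s\<in>{1..n-1}. tprod n n2 (V s) (e (t - int s)) i j k)"
      using split[of "\<lambda>s. tprod n n2 (V s) (e (t - int s)) i j k"] by simp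
    have et: "e t i j k = X t i j k - Xstar i j k" "e (t+1) i j k = X (t+1) i j k - Xstar i j k"
      unfolding e_def by simp_all
    show ?thesis
      unfolding et(2) xs h sp hU et(1) by (simp add: algebra_simps)
  qed
  have "frob n2 n3 n (e (t+1)) = frob n2 n3 n (\<lambda>i j k. tprod n n2 U (e t) i j k
          - \<alpha> * (\<Sum>s\<in>{1..n-1}. tprod n n2 (V s) (e (t - int s)) i j k))"
    by (rule frob_cong) (simp add: claim2)
  also have "\<dots> \<le> frob n2 n3 n (tprod n n2 U (e t))
        + frob n2 n3 n (\<lambda>i j k. \<alpha> * (\<Sum>s\<in>{1..n-1}. tprod n n2 (V s) (e (t - int s)) i j k))"
    by (rule frob_sub)
  also have "\<dots> = frob n2 n3 n (tprod n n2 U (e t))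
        + \<alpha> * frob n2 n3 n (\<lambda>i j k. (\<Sum>s\<in>{1..n-1}. tprod n n2 (V s) (e (t - int s)) i j k))"
    using alpha_pos by (simp add: frob_scale)
  also have "\<dots> \<le> \<kappa> * frob n2 n3 n (e t) + \<alpha> * (\<Sum>s\<in>{1..n-1}. \<mu> * frob n2 n3 n (e (t - int s)))"
  proof (rule add_mono)
    show "frob n2 n3 n (tprod n n2 U (e t)) \<le> \<kappa> * frob n2 n3 n (e t)"
      using tprod_bound[of n2 n3 n n2 U "e t"] kap[OF i0n] frob_nonneg[of n2 n3 n "e t"]
      unfolding U_def T_def by (meson mult_right_mono order_trans)
    have "frob n2 n3 n (\<lambda>i j k. (\<Sum>s\<in>{1..n-1}. tprod n n2 (V s) (e (t - int s)) i j k))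
        \<le> (\<Sum>s\<in>{1..n-1}. frob n2 n3 n (tprod n n2 (V s) (e (t - int s))))"
      by (rule frob_sum) simp
    also have "\<dots> \<le> (\<Sum>s\<in>{1..n-1}. \<mu> * frob n2 n3 n (e (t - int s)))"
    proof (rule sum_mono)
      fix s assume s: "s \<in> {1..n-1}"
      have sn: "\<sigma> s < n" unfolding \<sigma>_def using n_pos by (simp add: nat_less_iff)
      have ne: "i0 \<noteq> \<sigma> s" unfolding \<sigma>_def i0_def using sigma_ne[OF n_pos s, of t] by simp
      show "frob n2 n3 n (tprod n n2 (V s) (e (t - int s))) \<le> \<mu> * frob n2 n3 n (e (t - int s))"
        using tprod_bound[of n2 n3 n n2 "V s" "e (t - int s)"] mu[OF i0n sn ne]
          frob_nonneg[of n2 n3 n "e (t - int s)"]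
        unfolding V_def T_def by (meson mult_right_mono order_trans)
    qed
    finally show "\<alpha> * frob n2 n3 n (\<lambda>i j k. (\<Sum>s\<in>{1..n-1}. tprod n n2 (V s) (e (t - int s)) i j k))
        \<le> \<alpha> * (\<Sum>s\<in>{1..n-1}. \<mu> * frob n2 n3 n (e (t - int s)))"
      using alpha_pos by simp
  qed
  finally show ?thesis unfolding e_def by (simp add: sum_distrib_left mult.assoc)
qed

lemma unroll:
  fixes E :: "int \<Rightarrow> real" and \<kappa> c :: real and I :: "nat set"
  assumes k0: "\<kappa> \<ge> 0"
    and rec: "\<And>t. t \<ge> 0 \<Longrightarrow> E (t+1) \<le> \<kappa> * E t + c * (\<Sum>s\<in>I. E (t - int s))"
  shows "E (int m) \<le> \<kappa> ^ m * E 0 + c * (\<Sum>j<m. \<kappa> ^ j * (\<Sum>i\<in>I. E (int m - 1 - int j - int i)))"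
proof (induction m)
  case 0
  then show ?case by simp
next
  case (Suc m)
  have "E (int (Suc m)) = E (int m + 1)" by (simp add: add.commute)
  also have "\<dots> \<le> \<kappa> * E (int m) + c * (\<Sum>s\<in>I. E (int m - int s))" by (rule rec) simp
  also have "\<dots> \<le> \<kappa> * (\<kappa> ^ m * E 0 + c * (\<Sum>j<m. \<kappa> ^ j * (\<Sum>i\<in>I. E (int m - 1 - int j - int i))))
                  + c * (\<Sum>s\<in>I. E (int m - int s))"
    using Suc.IH k0 by (intro add_right_mono mult_left_mono) auto
  also have "\<dots> = \<kappa> ^ Suc m * E 0 + c * ((\<Sum>s\<in>I. E (int m - int s))
        + (\<Sum>j<m. \<kappa> ^ Suc j * (\<Sum>i\<in>I. E (int m - 1 - int j - int i))))"
    by (simp add: algebra_simps sum_distrib_left)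
  also have "(\<Sum>s\<in>I. E (int m - int s))
        + (\<Sum>j<m. \<kappa> ^ Suc j * (\<Sum>i\<in>I. E (int m - 1 - int j - int i)))
      = (\<Sum>j<Suc m. \<kappa> ^ j * (\<Sum>i\<in>I. E (int (Suc m) - 1 - int j - int i)))"
    unfolding sum.lessThan_Suc_shift by (simp add: algebra_simps)
  finally show ?case .
qed

lemma final:
  fixes E \<epsilon> :: "int \<Rightarrow> real" and \<kappa> c :: real and I :: "nat set"
  assumes k0: "\<kappa> \<ge> 0" and E00: "E 0 \<ge> 0"
    and c0: "I \<noteq> {} \<Longrightarrow> c \<ge> 0" and fI: "finite I" and I1: "\<And>i. i \<in> I \<Longrightarrow> i \<ge> 1"
    and rec: "\<And>t. t \<ge> 0 \<Longrightarrow> E (t+1) \<le> \<kappa> * E t + c * (\<Sum>s\<in>I. E (t - int s))"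
    and Einit: "\<And>t. t \<le> 0 \<Longrightarrow> E t = E 0"
    and eps_init: "\<And>t. t \<le> 0 \<Longrightarrow> \<epsilon> t = 1"
    and eps_step: "\<And>t. t \<ge> 1 \<Longrightarrow>
        \<epsilon> t = \<kappa> ^ nat t + c * (\<Sum>j<nat t. \<kappa> ^ j * (\<Sum>i\<in>I. \<epsilon> (t - 1 - int j - int i)))"
  shows "\<forall>t \<le> int m. E t \<le> \<epsilon> t * E 0"
proof (induction m)
  case 0
  show ?case
  proof (intro allI impI)
    fix t :: int assume "t \<le> int 0"
    then have t0: "t \<le> 0" by simp
    have "E t = E 0" "\<epsilon> t = 1" using Einit[OF t0] eps_init[OF t0] by this+
    then show "E t \<le> \<epsilon> t * E 0" by simp
  qed
next
  case (Suc m)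
  show ?case
  proof (intro allI impI)
    fix t assume t: "t \<le> int (Suc m)"
    show "E t \<le> \<epsilon> t * E 0"
    proof (cases "t \<le> int m")
      case True
      then show ?thesis using Suc.IH by simp
    next
      case False
      then have tt: "t = int (Suc m)" using t by simp
      have "E t \<le> \<kappa> ^ Suc m * E 0 + c * (\<Sum>j<Suc m. \<kappa> ^ j * (\<Sum>i\<in>I. E (int (Suc m) - 1 - int j - int i)))"
        unfolding tt by (rule unroll[OF k0 rec]) simp
      also have "\<dots> \<le> \<kappa> ^ Suc m * E 0 + c * (\<Sum>j<Suc m. \<kappa> ^ j * (\<Sum>i\<in>I. \<epsilon> (int (Suc m) - 1 - int j - int i) * E 0))"
      proof (cases "I = {}")
        case True then show ?thesis by simp
      next
        case False
        then have cn: "c \<ge> 0" by (rule c0)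
        have si: "(\<Sum>j<Suc m. \<kappa> ^ j * (\<Sum>i\<in>I. E (int (Suc m) - 1 - int j - int i)))
            \<le> (\<Sum>j<Suc m. \<kappa> ^ j * (\<Sum>i\<in>I. \<epsilon> (int (Suc m) - 1 - int j - int i) * E 0))"
        proof (rule sum_mono)
          fix j assume j: "j \<in> {..<Suc m}"
          have "(\<Sum>i\<in>I. E (int (Suc m) - 1 - int j - int i)) \<le> (\<Sum>i\<in>I. \<epsilon> (int (Suc m) - 1 - int j - int i) * E 0)"
          proof (rule sum_mono)
            fix i assume i: "i \<in> I"
            have "int (Suc m) - 1 - int j - int i \<le> int m" using I1[OF i] by linarith
            then show "E (int (Suc m) - 1 - int j - int i) \<le> \<epsilon> (int (Suc m) - 1 - int j - int i) * E 0"
              using Suc.IH by blast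
          qed
          then show "\<kappa> ^ j * (\<Sum>i\<in>I. E (int (Suc m) - 1 - int j - int i)) \<le> \<kappa> ^ j * (\<Sum>i\<in>I. \<epsilon> (int (Suc m) - 1 - int j - int i) * E 0)"
            using k0 by (intro mult_left_mono) simp_all
        qed
        show ?thesis using add_left_mono[OF mult_left_mono[OF si cn]] by simp
      qed
      also have "\<dots> = \<epsilon> t * E 0"
      proof -
        have t1: "1 \<le> t" and nt: "nat t = Suc m" using tt by simp_all
        have e: "\<epsilon> t = \<kappa> ^ Suc m + c * (\<Sum>j<Suc m. \<kappa> ^ j * (\<Sum>i\<in>I. \<epsilon> (int (Suc m) - 1 - int j - int i)))"
          using eps_step[OF t1] unfolding nt tt[symmetric] .
        have "(\<Sum>j<Suc m. \<kappa> ^ j * (\<Sum>i\<in>I. \<epsilon> (int (Suc m) - 1 - int j - int i) * E 0))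
            = (\<Sum>j<Suc m. \<kappa> ^ j * (\<Sum>i\<in>I. \<epsilon> (int (Suc m) - 1 - int j - int i))) * E 0"
          by (simp only: sum_distrib_right mult.assoc)
        then show ?thesis by (simp only: e distrib_right mult.assoc)
      qed
      finally show ?thesis .
    qed
  qed
qed

theorem lemma2:
  fixes n1 n2 n3 n :: nat
    and A B Xstar :: tensor
    and \<alpha> \<kappa> \<mu> :: real
    and X :: "int \<Rightarrow> tensor"
    and \<epsilon> :: "int \<Rightarrow> real"
  assumes n_pos: "n \<ge> 1"
    and alpha_pos: "\<alpha> > 0"
    and sol: "\<forall>i<n1. \<forall>j<n3. \<forall>k<n. tprod n n2 A Xstar i j k = B i j k"
    and uniq: "\<And>Y. (\<forall>i<n1. \<forall>j<n3. \<forall>k<n. tprod n n2 A Y i j k = B i j k) \<Longrightarrow>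
                 (\<forall>i<n2. \<forall>j<n3. \<forall>k<n. Y i j k = Xstar i j k)"
    and kappa_def: "\<kappa> = Max {top_norm n2 n2 n
              (\<lambda>a b c. tident a b c - \<alpha> * tprod n n1 (ttrans n (tslice A i)) (tslice A i) a b c)
              | i. i < n}"
    and mu_def: "\<mu> = Max {top_norm n2 n2 n (tprod n n1 (ttrans n (tslice A i)) (tslice A j))
              | i j. i < n \<and> j < n \<and> i \<noteq> j}"
    and X_init: "\<And>t. t \<le> 0 \<Longrightarrow> X t = (\<lambda>_ _ _. 0)"
    and X_step: "\<And>t. t \<ge> 0 \<Longrightarrow>
        X (t + 1) = (\<lambda>i j k. X t i j k + \<alpha> * tprod n n1 (ttrans n (tslice A (nat (t mod int n))))
            (\<lambda>a b c. B a b c - (\<Sum>s<n. tprod n n2 (tslice A (nat ((t - int s) mod int n)))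
                                          (X (t - int s)) a b c)) i j k)"
    and eps_init: "\<And>t. t \<le> 0 \<Longrightarrow> \<epsilon> t = 1"
    and eps_step: "\<And>t. t \<ge> 1 \<Longrightarrow>
        \<epsilon> t = \<kappa> ^ nat t + \<alpha> * \<mu> * (\<Sum>j<nat t. \<kappa> ^ j *
                  (\<Sum>i\<in>{1..n-1}. \<epsilon> (t - 1 - int j - int i)))"
  shows "\<forall>t\<ge>1. frob n2 n3 n (\<lambda>i j k. X t i j k - Xstar i j k)
               \<le> \<epsilon> t * frob n2 n3 n (\<lambda>i j k. X 0 i j k - Xstar i j k)"
proof -
  have n0: "n > 0" using n_pos by simp
  define f where "f i = top_norm n2 n2 n
              (\<lambda>a b c. tident a b c - \<alpha> * tprod n n1 (ttrans n (tslice A i)) (tslice A i) a b c)" for i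
  define g where "g i j = top_norm n2 n2 n (tprod n n1 (ttrans n (tslice A i)) (tslice A j))" for i j
  have tn0: "top_norm a b c C \<ge> 0" for a b c C unfolding top_norm_def by (rule mat_norm2_nonneg)
  have finK: "finite {f i | i. i < n}"
  proof -
    have "{f i | i. i < n} = f ` {..<n}" by auto
    then show ?thesis by simp
  qed
  have finM: "finite {g i j | i j. i < n \<and> j < n \<and> i \<noteq> j}"
  proof (rule finite_subset)
    show "{g i j | i j. i < n \<and> j < n \<and> i \<noteq> j} \<subseteq> (\<lambda>(i,j). g i j) ` ({..<n} \<times> {..<n})" by auto
  qed simp
  have kap: "f i \<le> \<kappa>" if "i < n" for i
    unfolding kappa_def f_def[symmetric] by (rule Max_ge[OF finK]) (use that in auto)
  have mu: "g i j \<le> \<mu>" if "i < n" "j < n" "i \<noteq> j" for i j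
    unfolding mu_def g_def[symmetric] by (rule Max_ge[OF finM]) (use that in auto)
  have k0: "\<kappa> \<ge> 0" using kap[OF n0] tn0[of n2 n2 n] unfolding f_def by (meson order_trans)
  have c0: "\<alpha> * \<mu> \<ge> 0" if "{1..n-1} \<noteq> {}"
  proof -
    have n2: "1 < n" using that by auto
    have "0 \<le> g 0 1" unfolding g_def by (rule tn0)
    also have "\<dots> \<le> \<mu>" using n2 by (intro mu) auto
    finally show ?thesis using alpha_pos by simp
  qed
  define E where "E u = frob n2 n3 n (\<lambda>i j k. X u i j k - Xstar i j k)" for u
  have rec: "E (t+1) \<le> \<kappa> * E t + (\<alpha> * \<mu>) * (\<Sum>s\<in>{1..n-1}. E (t - int s))" if t0: "t \<ge> 0" for t
    unfolding E_def
  proof (rule recursion[OF n0 alpha_pos t0 sol])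
    show "\<And>i. i < n \<Longrightarrow> top_norm n2 n2 n
              (\<lambda>a b c. tident a b c - \<alpha> * tprod n n1 (ttrans n (tslice A i)) (tslice A i) a b c) \<le> \<kappa>"
      using kap unfolding f_def .
    show "\<And>i j. i < n \<Longrightarrow> j < n \<Longrightarrow> i \<noteq> j \<Longrightarrow>
          top_norm n2 n2 n (tprod n n1 (ttrans n (tslice A i)) (tslice A j)) \<le> \<mu>"
      using mu unfolding g_def .
    show "X (t + 1) = (\<lambda>i j k. X t i j k + \<alpha> * tprod n n1 (ttrans n (tslice A (nat (t mod int n))))
            (\<lambda>a b c. B a b c - (\<Sum>s<n. tprod n n2 (tslice A (nat ((t - int s) mod int n)))
                                          (X (t - int s)) a b c)) i j k)"
      by (rule X_step[OF t0])
  qed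
  have Einit: "E t = E 0" if "t \<le> 0" for t
    unfolding E_def X_init[OF that] X_init[of 0, simplified] ..
  have main: "\<forall>t \<le> int m. E t \<le> \<epsilon> t * E 0" for m
    by (rule final[OF k0 _ c0 _ _ rec Einit eps_init eps_step])
       (auto simp: E_def frob_nonneg)
  show ?thesis
  proof (intro allI impI)
    fix t :: int assume "t \<ge> 1"
    then have "t \<le> int (nat t)" by simp
    then show "frob n2 n3 n (\<lambda>i j k. X t i j k - Xstar i j k)
               \<le> \<epsilon> t * frob n2 n3 n (\<lambda>i j k. X 0 i j k - Xstar i j k)"
      using main[of "nat t"] unfolding E_def by blast
  qed
qed

end
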